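(* Let $\mathcal{X}=\{X\in\mathbb{S}^n_+:\operatorname{rank}(X)\le k,\ \|X\|_2\le1\}$. Then (i) $\operatorname{clconv}(\mathcal{X})=\operatorname{conv}(\mathcal{X})=\{X\in\mathbb{S}^n_+:\operatorname{tr}(X)\le k,\ \|X\|_2\le1\}$; and (ii) every face $F$ of $\operatorname{clconv}(\mathcal{X})$ of dimension at most one satisfies $F\subseteq\mathcal{X}$.
   Context: $\mathbb{S}^n_+$ is the cone of $n\times n$ positive semidefinite matrices, $k\le n$ is a positive integer, and $\|X\|_2$ is the spectral norm (largest singular value). A face of a closed convex set $D$ is a convex $F\subseteq D$ such that any segment $[a,b]\subseteq D$ with $(a,b)\cap F\neq\emptyset$ lies in $F$; its dimension is that of its affine hull. *)

theory Defs
  imports "HOL-Analysis.Analysis"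
begin

definition psd :: "real^'n^'n \<Rightarrow> bool" where
  "psd X \<longleftrightarrow> transpose X = X \<and> (\<forall>x. 0 \<le> x \<bullet> (X *v x))"

definition spec_norm :: "real^'n^'n \<Rightarrow> real" where
  "spec_norm X = onorm (\<lambda>x. X *v x)"

definition rank_set :: "nat \<Rightarrow> (real^'n^'n) set" where
  "rank_set k = {X. psd X \<and> rank X \<le> k \<and> spec_norm X \<le> 1}"

end

theory Submission
  imports Defs
begin

lemma sym_inner:
  fixes A :: "real^'n^'n"
  assumes "transpose A = A"
  shows "x \<bullet> (A *v y) = (A *v x) \<bullet> y"
  by (metis assms dot_lmul_matrix vector_transpose_matrix)

lemma quad_zero:
  fixes a c :: real
  assumes "\<And>t. 2*t*a + t^2*c \<le> 0"
  shows "a = 0"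
proof -
  define t where "t = a / (\<bar>c\<bar> + 1)"
  have p: "\<bar>c\<bar> + 1 > 0" by simp
  have "2*t*a + t^2*c \<le> 0" by (rule assms)
  hence "(2*t*a + t^2*c) * (\<bar>c\<bar> + 1)^2 \<le> 0" by (simp add: mult_nonpos_nonneg)
  moreover have "(2*t*a + t^2*c) * (\<bar>c\<bar> + 1)^2 = a^2 * (2*(\<bar>c\<bar>+1) + c)"
  proof -
    have ts: "t * (\<bar>c\<bar> + 1) = a" unfolding t_def using p by simp
    have "(2*t*a + t^2*c) * (\<bar>c\<bar> + 1)^2 = 2*a*(t * (\<bar>c\<bar> + 1))*(\<bar>c\<bar> + 1) + (t * (\<bar>c\<bar> + 1))^2 * c"
      by (simp add: power2_eq_square algebra_simps)
    also have "\<dots> = a^2 * (2*(\<bar>c\<bar>+1) + c)" unfolding ts by (simp add: power2_eq_square algebra_simps)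
    finally show ?thesis .
  qed
  ultimately have "a^2 * (2*(\<bar>c\<bar>+1) + c) \<le> 0" by simp
  moreover have "2*(\<bar>c\<bar>+1) + c > 0" by (cases "c \<ge> 0") auto
  ultimately have "a^2 \<le> 0" by (simp add: mult_le_0_iff)
  thus ?thesis by simp
qed

lemma eigen_exists:
  fixes A :: "real^'n^'n"
  assumes sym: "transpose A = A" and S: "subspace S" and inv: "\<And>x. x \<in> S \<Longrightarrow> A *v x \<in> S"
    and x: "x \<in> S" "x \<noteq> 0"
  shows "\<exists>u\<in>S. norm u = 1 \<and> A *v u = (u \<bullet> (A *v u)) *\<^sub>R u"
proof -
  let ?K = "S \<inter> sphere 0 1"
  have "compact ?K" using S by (simp add: closed_subspace closed_Int_compact)
  moreover have "?K \<noteq> {}"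
  proof -
    have "x /\<^sub>R norm x \<in> ?K" using x S by (simp add: subspace_scale)
    thus ?thesis by blast
  qed
  moreover have "continuous_on ?K (\<lambda>y. y \<bullet> (A *v y))" by (intro continuous_intros)
  ultimately have "\<exists>u\<in>?K. \<forall>y\<in>?K. y \<bullet> (A *v y) \<le> u \<bullet> (A *v u)"
    by (rule continuous_attains_sup)
  then obtain u where u: "u \<in> ?K" and umax: "\<And>y. y \<in> ?K \<Longrightarrow> y \<bullet> (A *v y) \<le> u \<bullet> (A *v u)"
    by blast
  define l where "l = u \<bullet> (A *v u)"
  have bound: "z \<bullet> (A *v z) \<le> l * (z \<bullet> z)" if z: "z \<in> S" for z
  proof (cases "z = 0")
    case True then show ?thesis by simp
  next
    case False
    have "z /\<^sub>R norm z \<in> ?K" using False z S by (simp add: subspace_scale)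
    hence "(z /\<^sub>R norm z) \<bullet> (A *v (z /\<^sub>R norm z)) \<le> l" using umax l_def by blast
    hence "(z \<bullet> (A *v z)) / (norm z)^2 \<le> l"
      by (simp add: matrix_vector_mult_scaleR power2_eq_square divide_inverse mult.commute mult.left_commute)
    moreover have "(norm z)^2 > 0" using False by simp
    ultimately have "z \<bullet> (A *v z) \<le> l * (norm z)^2" by (simp add: divide_le_eq)
    thus ?thesis by (simp add: power2_norm_eq_inner)
  qed
  define v where "v = A *v u - l *\<^sub>R u"
  have uS: "u \<in> S" and un: "norm u = 1" using u by auto
  have vS: "v \<in> S" unfolding v_def using uS inv S by (simp add: subspace_diff subspace_scale)
  have uu: "u \<bullet> u = 1" using un by (simp add: norm_eq_1)
  have "2*t*(v \<bullet> v) + t^2 * (v \<bullet> (A *v v) - l * (v \<bullet> v)) \<le> 0" for t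
  proof -
    have "u + t *\<^sub>R v \<in> S" using uS vS S by (simp add: subspace_add subspace_scale)
    from bound[OF this] have H0: "(u + t *\<^sub>R v) \<bullet> (A *v (u + t *\<^sub>R v)) \<le> l * ((u + t *\<^sub>R v) \<bullet> (u + t *\<^sub>R v))" .
    have E1: "(u + t *\<^sub>R v) \<bullet> (A *v (u + t *\<^sub>R v)) = l + 2*t*(v \<bullet> (A *v u)) + t^2 * (v \<bullet> (A *v v))"
      using sym_inner[OF sym, of u v]
      by (simp add: matrix_vector_right_distrib matrix_vector_mult_scaleR inner_add_left inner_add_right
          l_def power2_eq_square algebra_simps inner_commute)
    have E2: "(u + t *\<^sub>R v) \<bullet> (u + t *\<^sub>R v) = 1 + 2*t*(v \<bullet> u) + t^2*(v \<bullet> v)"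
      using uu by (simp add: inner_add_left inner_add_right power2_eq_square algebra_simps inner_commute)
    have E3: "v \<bullet> (A *v u) = v \<bullet> v + l * (v \<bullet> u)"
      unfolding v_def by (simp add: inner_diff_left inner_diff_right algebra_simps inner_commute)
    have H: "l + 2*t*(v \<bullet> (A *v u)) + t^2 * (v \<bullet> (A *v v)) \<le> l*(1 + 2*t*(v \<bullet> u) + t^2*(v \<bullet> v))"
      using H0 unfolding E1 E2 .
    show ?thesis using H unfolding E3 by (simp add: algebra_simps)
  qed
  hence "v \<bullet> v = 0" by (intro quad_zero) 
  hence "v = 0" by simp
  thus ?thesis using uS un unfolding v_def l_def by (intro bexI[of _ u]) auto
qed

lemma spectral_sub:
  fixes A :: "real^'n^'n"
  assumes sym: "transpose A = A"
  shows "subspace S \<Longrightarrow> (\<And>x. x \<in> S \<Longrightarrow> A *v x \<in> S) \<Longrightarrow>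
    \<exists>B. B \<subseteq> S \<and> finite B \<and> (\<forall>b\<in>B. norm b = 1) \<and> pairwise orthogonal B \<and> S \<subseteq> span B
       \<and> (\<forall>b\<in>B. A *v b = (b \<bullet> (A *v b)) *\<^sub>R b)"
proof (induction "dim S" arbitrary: S rule: less_induct)
  case less
  show ?case
  proof (cases "S \<subseteq> {0}")
    case True
    then show ?thesis by (intro exI[of _ "{}"]) (auto simp: span_empty)
  next
    case False
    then obtain x where x: "x \<in> S" "x \<noteq> 0" by blast
    from eigen_exists[OF sym less.prems(1) less.prems(2) x] obtain u where
      uS: "u \<in> S" and un: "norm u = 1" and ue: "A *v u = (u \<bullet> (A *v u)) *\<^sub>R u" by blast
    define S' where "S' = S \<inter> {y. orthogonal u y}"
    have sub': "subspace S'" unfolding S'_def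
      using subspace_inter[OF less.prems(1) subspace_orthogonal_to_vector[of u]] by simp
    have inv': "A *v y \<in> S'" if "y \<in> S'" for y
    proof -
      have "u \<bullet> (A *v y) = (A *v u) \<bullet> y" by (rule sym_inner[OF sym])
      also have "\<dots> = (u \<bullet> (A *v u)) * (u \<bullet> y)" by (subst ue) (simp only: inner_scaleR_left)
      also have "\<dots> = 0" using that unfolding S'_def orthogonal_def by simp
      finally show ?thesis using that less.prems(2) unfolding S'_def orthogonal_def by auto
    qed
    have uu: "u \<bullet> u = 1" using un by (simp add: norm_eq_1)
    have "u \<notin> S'" using uu unfolding S'_def orthogonal_def by auto
    hence "S' \<subset> S" using uS unfolding S'_def by auto
    hence "dim S' < dim S"
      using dim_psubset[of S' S] span_eq_iff[THEN iffD2, OF sub'] span_eq_iff[THEN iffD2, OF less.prems(1)] by simp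
    from less.hyps[OF this sub' inv'] obtain B' where B': "B' \<subseteq> S'" "finite B'" "\<forall>b\<in>B'. norm b = 1"
      "pairwise orthogonal B'" "S' \<subseteq> span B'" "\<forall>b\<in>B'. A *v b = (b \<bullet> (A *v b)) *\<^sub>R b" by blast
    show ?thesis
    proof (intro exI[of _ "insert u B'"] conjI)
      show "insert u B' \<subseteq> S" using B'(1) uS unfolding S'_def by auto
      show "finite (insert u B')" using B'(2) by simp
      show "\<forall>b\<in>insert u B'. norm b = 1" using B'(3) un by auto
      show "pairwise orthogonal (insert u B')"
        using B'(4) B'(1) unfolding S'_def pairwise_insert
        by (auto simp: orthogonal_commute)
      show "\<forall>b\<in>insert u B'. A *v b = (b \<bullet> (A *v b)) *\<^sub>R b" using B'(6) ue by auto
      show "S \<subseteq> span (insert u B')"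
      proof
        fix y assume y: "y \<in> S"
        have "y - (u \<bullet> y) *\<^sub>R u \<in> S'" unfolding S'_def orthogonal_def
          using y uS less.prems(1) uu by (auto simp: subspace_diff subspace_scale inner_diff_right)
        hence "y - (u \<bullet> y) *\<^sub>R u \<in> span (insert u B')" using B'(5) span_mono[of B' "insert u B'"] by auto
        moreover have "(u \<bullet> y) *\<^sub>R u \<in> span (insert u B')" by (simp add: span_base span_scale)
        ultimately have "y - (u \<bullet> y) *\<^sub>R u + (u \<bullet> y) *\<^sub>R u \<in> span (insert u B')" by (rule span_add)
        thus "y \<in> span (insert u B')" by simp
      qed
    qed
  qed
qed

definition onb :: "(real^'n) set \<Rightarrow> bool" where
  "onb B \<longleftrightarrow> finite B \<and> (\<forall>b\<in>B. norm b = 1) \<and> pairwise orthogonal B \<and> span B = UNIV"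

lemma spectral:
  fixes A :: "real^'n^'n"
  assumes sym: "transpose A = A"
  shows "\<exists>B. onb B \<and> (\<forall>b\<in>B. A *v b = (b \<bullet> (A *v b)) *\<^sub>R b)"
  using spectral_sub[OF sym, of UNIV] unfolding onb_def by auto

lemma onb_inner:
  assumes "onb B" "b \<in> B" "c \<in> B"
  shows "b \<bullet> c = (if b = c then 1 else 0)"
  using assms unfolding onb_def pairwise_def orthogonal_def by (auto simp: norm_eq_1)

lemma onb_expand:
  assumes B: "onb B"
  shows "x = (\<Sum>b\<in>B. (b \<bullet> x) *\<^sub>R b)"
proof -
  have fin: "finite B" using B by (simp add: onb_def)
  have "x \<in> span B" using B by (simp add: onb_def)
  then obtain c where c: "x = (\<Sum>b\<in>B. c b *\<^sub>R b)" using span_finite[OF fin] by auto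
  have "b' \<bullet> x = c b'" if "b' \<in> B" for b'
  proof -
    have "b' \<bullet> x = (\<Sum>b\<in>B. c b * (b' \<bullet> b))" unfolding c by (simp add: inner_sum_right)
    also have "\<dots> = (\<Sum>b\<in>B. if b = b' then c b else 0)"
      by (rule sum.cong) (use onb_inner[OF B that] in auto)
    also have "\<dots> = c b'" using fin that by simp
    finally show ?thesis .
  qed
  hence "(\<Sum>b\<in>B. (b \<bullet> x) *\<^sub>R b) = (\<Sum>b\<in>B. c b *\<^sub>R b)" by (intro sum.cong) auto
  thus ?thesis using c by simp
qed

lemma onb_parseval:
  assumes B: "onb B"
  shows "x \<bullet> y = (\<Sum>b\<in>B. (b \<bullet> x) * (b \<bullet> y))"
proof -
  have "x \<bullet> y = x \<bullet> (\<Sum>b\<in>B. (b \<bullet> y) *\<^sub>R b)" using onb_expand[OF B, of y] by simp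
  also have "\<dots> = (\<Sum>b\<in>B. (b \<bullet> x) * (b \<bullet> y))" by (simp add: inner_sum_right inner_commute mult.commute)
  finally show ?thesis .
qed

lemma onb_eigen_apply:
  fixes A :: "real^'n^'n"
  assumes B: "onb B" and e: "\<forall>b\<in>B. A *v b = (b \<bullet> (A *v b)) *\<^sub>R b"
  shows "A *v x = (\<Sum>b\<in>B. ((b \<bullet> (A *v b)) * (b \<bullet> x)) *\<^sub>R b)"
proof -
  have "A *v x = A *v (\<Sum>b\<in>B. (b \<bullet> x) *\<^sub>R b)" using onb_expand[OF B, of x] by simp
  also have "\<dots> = (\<Sum>b\<in>B. (b \<bullet> x) *\<^sub>R (A *v b))"
    by (simp add: linear_sum[OF matrix_vector_mul_linear] linear_scale[OF matrix_vector_mul_linear] o_def)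
  also have "\<dots> = (\<Sum>b\<in>B. ((b \<bullet> (A *v b)) * (b \<bullet> x)) *\<^sub>R b)"
  proof (rule sum.cong)
    fix b assume "b \<in> B"
    define lam where "lam = b \<bullet> (A *v b)"
    have h: "A *v b = lam *\<^sub>R b" using e \<open>b \<in> B\<close> unfolding lam_def by blast
    have "(b \<bullet> x) *\<^sub>R (A *v b) = (b \<bullet> x) *\<^sub>R (lam *\<^sub>R b)" using h by simp
    also have "\<dots> = (lam * (b \<bullet> x)) *\<^sub>R b" by simp
    finally show "(b \<bullet> x) *\<^sub>R (A *v b) = ((b \<bullet> (A *v b)) * (b \<bullet> x)) *\<^sub>R b"
      unfolding lam_def .
  qed simp
  finally show ?thesis .
qed

lemma onb_eigen_quad:
  fixes A :: "real^'n^'n"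
  assumes B: "onb B" and e: "\<forall>b\<in>B. A *v b = (b \<bullet> (A *v b)) *\<^sub>R b"
  shows "x \<bullet> (A *v x) = (\<Sum>b\<in>B. (b \<bullet> (A *v b)) * (b \<bullet> x)^2)"
  unfolding onb_eigen_apply[OF B e, of x]
  by (simp add: inner_sum_right power2_eq_square inner_commute mult.assoc)

lemma onb_trace:
  fixes A :: "real^'n^'n"
  assumes B: "onb B"
  shows "trace A = (\<Sum>b\<in>B. b \<bullet> (A *v b))"
proof -
  have fin: "finite B" using B by (simp add: onb_def)
  have ei: "(\<Sum>b\<in>B. (b $ i) *\<^sub>R b) = axis i 1" for i
  proof -
    have "(\<Sum>b\<in>B. (b $ i) *\<^sub>R b) = (\<Sum>b\<in>B. (b \<bullet> axis i 1) *\<^sub>R b)"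
      by (simp add: inner_axis)
    also have "\<dots> = axis i 1" using onb_expand[OF B, of "axis i 1"] by simp
    finally show ?thesis .
  qed
  have "(\<Sum>b\<in>B. b \<bullet> (A *v b)) = (\<Sum>b\<in>B. \<Sum>i\<in>UNIV. b $ i * (A *v b) $ i)"
    by (simp add: inner_vec_def)
  also have "\<dots> = (\<Sum>i\<in>UNIV. \<Sum>b\<in>B. b $ i * (A *v b) $ i)" by (rule sum.swap)
  also have "\<dots> = (\<Sum>i\<in>UNIV. (A *v (\<Sum>b\<in>B. (b $ i) *\<^sub>R b)) $ i)"
    by (simp add: linear_sum[OF matrix_vector_mul_linear] linear_scale[OF matrix_vector_mul_linear] o_def sum_component)
  also have "\<dots> = (\<Sum>i\<in>UNIV. (A *v axis i 1) $ i)" by (simp add: ei)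
  also have "\<dots> = trace A" by (simp add: trace_def matrix_vector_mult_basis column_def)
  finally show ?thesis by simp
qed

lemma spec_apply:
  fixes X :: "real^'n^'n"
  assumes "spec_norm X \<le> 1"
  shows "norm (X *v x) \<le> norm x"
proof -
  have "norm (X *v x) \<le> spec_norm X * norm x"
    unfolding spec_norm_def by (rule onorm) simp
  also have "\<dots> \<le> norm x" using mult_right_mono[OF assms, of "norm x"] by simp
  finally show ?thesis .
qed

lemma norm_crit:
  fixes M :: "real^'n^'n"
  assumes sym: "transpose M = M" and lo: "\<And>x. 0 \<le> x \<bullet> (M *v x)" and hi: "\<And>x. x \<bullet> (M *v x) \<le> x \<bullet> x"
  shows "spec_norm M \<le> 1"
proof -
  obtain B where B: "onb B" and e: "\<forall>b\<in>B. M *v b = (b \<bullet> (M *v b)) *\<^sub>R b"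
    using spectral[OF sym] by blast
  have bb: "b \<bullet> b = 1" if "b \<in> B" for b using onb_inner[OF B that that] by simp
  have nu: "0 \<le> b \<bullet> (M *v b) \<and> b \<bullet> (M *v b) \<le> 1" if "b \<in> B" for b
    using lo[of b] hi[of b] bb[OF that] by simp
  have "norm (M *v x) \<le> 1 * norm x" for x
  proof -
    have "(norm (M *v x))^2 = (M *v x) \<bullet> (M *v x)" by (simp add: power2_norm_eq_inner)
    also have "\<dots> = (\<Sum>b\<in>B. (b \<bullet> (M *v x)) * (b \<bullet> (M *v x)))" by (rule onb_parseval[OF B])
    also have "\<dots> = (\<Sum>b\<in>B. (b \<bullet> (M *v b))^2 * (b \<bullet> x)^2)"
    proof (rule sum.cong)
      fix b assume b: "b \<in> B"
      define lam where "lam = b \<bullet> (M *v b)"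
      have h: "M *v b = lam *\<^sub>R b" using e b unfolding lam_def by blast
      have "b \<bullet> (M *v x) = (M *v b) \<bullet> x" by (rule sym_inner[OF sym])
      also have "\<dots> = lam * (b \<bullet> x)" unfolding h by simp
      finally show "(b \<bullet> (M *v x)) * (b \<bullet> (M *v x)) = (b \<bullet> (M *v b))^2 * (b \<bullet> x)^2"
        unfolding lam_def by (simp add: power2_eq_square)
    qed simp
    also have "\<dots> \<le> (\<Sum>b\<in>B. (b \<bullet> x)^2)"
    proof (rule sum_mono)
      fix b assume "b \<in> B"
      hence "(b \<bullet> (M *v b))^2 \<le> 1" using nu by (simp add: power_le_one abs_le_iff)
      thus "(b \<bullet> (M *v b))^2 * (b \<bullet> x)^2 \<le> (b \<bullet> x)^2" by (simp add: mult_left_le_one_le)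
    qed
    also have "\<dots> = x \<bullet> x" using onb_parseval[OF B, of x x] by (simp add: power2_eq_square)
    also have "\<dots> = (norm x)^2" by (simp add: power2_norm_eq_inner)
    finally have "(norm (M *v x))^2 \<le> (norm x)^2" .
    thus ?thesis by (simp add: power2_le_iff_abs_le)
  qed
  thus ?thesis unfolding spec_norm_def by (rule onorm_le)
qed

lemma eig_bounds:
  fixes X :: "real^'n^'n"
  assumes "psd X" "spec_norm X \<le> 1" "norm b = 1"
  shows "0 \<le> b \<bullet> (X *v b) \<and> b \<bullet> (X *v b) \<le> 1"
proof
  show "0 \<le> b \<bullet> (X *v b)" using assms(1) unfolding psd_def by blast
  have "b \<bullet> (X *v b) \<le> norm b * norm (X *v b)" by (rule norm_cauchy_schwarz)
  also have "\<dots> \<le> 1" using spec_apply[OF assms(2), of b] assms(3) by simp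
  finally show "b \<bullet> (X *v b) \<le> 1" .
qed

lemma onb_indep:
  assumes B: "onb B" and P: "P \<subseteq> B"
  shows "independent P"
proof (rule pairwise_orthogonal_independent)
  show "pairwise orthogonal P" using B P unfolding onb_def by (auto intro: pairwise_subset)
  show "0 \<notin> P"
  proof
    assume "0 \<in> P"
    hence "0 \<in> B" using P by blast
    thus False using B unfolding onb_def by fastforce
  qed
qed

lemma trace_le_rank:
  fixes X :: "real^'n^'n"
  assumes X: "psd X" "spec_norm X \<le> 1"
  shows "trace X \<le> real (rank X)"
proof -
  have sym: "transpose X = X" using X(1) unfolding psd_def by blast
  obtain B where B: "onb B" and e: "\<forall>b\<in>B. X *v b = (b \<bullet> (X *v b)) *\<^sub>R b"
    using spectral[OF sym] by blast
  have fin: "finite B" using B unfolding onb_def by blast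
  define P where "P = {b\<in>B. b \<bullet> (X *v b) \<noteq> 0}"
  have bnd: "0 \<le> b \<bullet> (X *v b) \<and> b \<bullet> (X *v b) \<le> 1" if "b \<in> B" for b
    using eig_bounds[OF X, of b] B that unfolding onb_def by auto
  have "trace X = (\<Sum>b\<in>B. b \<bullet> (X *v b))" by (rule onb_trace[OF B])
  also have "\<dots> = (\<Sum>b\<in>P. b \<bullet> (X *v b))"
    by (rule sum.mono_neutral_right) (use fin in \<open>auto simp: P_def\<close>)
  also have "\<dots> \<le> (\<Sum>b\<in>P. 1)" by (rule sum_mono) (use bnd in \<open>auto simp: P_def\<close>)
  also have "\<dots> = real (card P)" by simp
  also have "card P \<le> rank X"
  proof -
    have "P \<subseteq> range (\<lambda>x. X *v x)"
    proof
      fix b assume b: "b \<in> P"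
      define lam where "lam = b \<bullet> (X *v b)"
      have h: "X *v b = lam *\<^sub>R b" using e b unfolding lam_def P_def by blast
      have "lam \<noteq> 0" using b unfolding lam_def P_def by blast
      hence "X *v ((1/lam) *\<^sub>R b) = b" by (simp add: matrix_vector_mult_scaleR h)
      thus "b \<in> range (\<lambda>x. X *v x)" using range_eqI[of b "\<lambda>x. X *v x" "(1/lam) *\<^sub>R b"] by simp
    qed
    moreover have "independent P" by (rule onb_indep[OF B]) (auto simp: P_def)
    ultimately have "card P \<le> dim (range (\<lambda>x. X *v x))" by (rule independent_card_le_dim)
    thus ?thesis by (simp add: rank_dim_range)
  qed
  hence "real (card P) \<le> real (rank X)" by simp
  finally show ?thesis .
qed

lemma rank_le_card:
  fixes X :: "real^'n^'n"
  assumes B: "onb B" and e: "\<forall>b\<in>B. X *v b = (b \<bullet> (X *v b)) *\<^sub>R b"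
  shows "rank X \<le> card {b\<in>B. b \<bullet> (X *v b) \<noteq> 0}"
proof -
  define P where "P = {b\<in>B. b \<bullet> (X *v b) \<noteq> 0}"
  have fin: "finite B" using B unfolding onb_def by blast
  have "range (\<lambda>x. X *v x) \<subseteq> span P"
  proof
    fix y assume "y \<in> range (\<lambda>x. X *v x)"
    then obtain x where y: "y = X *v x" by blast
    have "y = (\<Sum>b\<in>B. ((b \<bullet> (X *v b)) * (b \<bullet> x)) *\<^sub>R b)" unfolding y by (rule onb_eigen_apply[OF B e])
    also have "\<dots> = (\<Sum>b\<in>P. ((b \<bullet> (X *v b)) * (b \<bullet> x)) *\<^sub>R b)"
      by (rule sum.mono_neutral_right) (use fin in \<open>auto simp: P_def\<close>)
    also have "\<dots> \<in> span P" by (intro span_sum span_scale span_base) 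
    finally show "y \<in> span P" .
  qed
  hence "dim (range (\<lambda>x. X *v x)) \<le> card P" by (rule dim_le_card) (use fin in \<open>simp add: P_def\<close>)
  thus ?thesis by (simp add: rank_dim_range P_def)
qed

definition Cset :: "nat \<Rightarrow> (real^'n^'n) set" where
  "Cset k = {X. psd X \<and> trace X \<le> real k \<and> spec_norm X \<le> 1}"

lemma inC:
  fixes M :: "real^'n^'n"
  assumes "transpose M = M" "\<And>x. 0 \<le> x \<bullet> (M *v x)" "\<And>x. x \<bullet> (M *v x) \<le> x \<bullet> x" "trace M \<le> real k"
  shows "M \<in> Cset k"
  using assms norm_crit[OF assms(1-3)] unfolding Cset_def psd_def by blast

lemma C_hi:
  fixes X :: "real^'n^'n"
  assumes "spec_norm X \<le> 1"
  shows "x \<bullet> (X *v x) \<le> x \<bullet> x"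
proof -
  have "x \<bullet> (X *v x) \<le> norm x * norm (X *v x)" by (rule norm_cauchy_schwarz)
  also have "\<dots> \<le> norm x * norm x" using spec_apply[OF assms, of x] by (simp add: mult_left_mono)
  also have "\<dots> = x \<bullet> x" by (simp add: dot_square_norm power2_eq_square)
  finally show ?thesis .
qed

lemma spec_iff:
  fixes X :: "real^'n^'n"
  shows "spec_norm X \<le> 1 \<longleftrightarrow> (\<forall>x. norm (X *v x) \<le> norm x)"
proof
  assume "spec_norm X \<le> 1" thus "\<forall>x. norm (X *v x) \<le> norm x" using spec_apply by blast
next
  assume "\<forall>x. norm (X *v x) \<le> norm x"
  thus "spec_norm X \<le> 1" unfolding spec_norm_def by (intro onorm_le) simp
qed

lemma trace_scaleR: "trace (c *\<^sub>R (A::real^'n^'n)) = c * trace A"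
  by (simp add: trace_def sum_distrib_left)

lemma convex_C: "convex (Cset k :: (real^'n^'n) set)"
proof (rule convexI)
  fix X Y :: "real^'n^'n" and u v :: real
  assume X: "X \<in> Cset k" and Y: "Y \<in> Cset k" and u: "0 \<le> u" and v: "0 \<le> v" and uv: "u + v = 1"
  have sX: "transpose X = X" and sY: "transpose Y = Y" using X Y unfolding Cset_def psd_def by auto
  have ap: "(u *\<^sub>R X + v *\<^sub>R Y) *v x = u *\<^sub>R (X *v x) + v *\<^sub>R (Y *v x)" for x
    by (simp add: matrix_vector_mult_add_rdistrib scaleR_matrix_vector_assoc)
  show "u *\<^sub>R X + v *\<^sub>R Y \<in> Cset k"
  proof (rule inC)
    show "transpose (u *\<^sub>R X + v *\<^sub>R Y) = u *\<^sub>R X + v *\<^sub>R Y"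
      using sX sY by (simp add: transpose_def vec_eq_iff)
    fix x
    have qx: "0 \<le> x \<bullet> (X *v x)" "0 \<le> x \<bullet> (Y *v x)" using X Y unfolding Cset_def psd_def by auto
    have hx: "x \<bullet> (X *v x) \<le> x \<bullet> x" "x \<bullet> (Y *v x) \<le> x \<bullet> x" using X Y C_hi unfolding Cset_def by auto
    have e: "x \<bullet> ((u *\<^sub>R X + v *\<^sub>R Y) *v x) = u * (x \<bullet> (X *v x)) + v * (x \<bullet> (Y *v x))"
      by (simp add: ap inner_add_right)
    show "0 \<le> x \<bullet> ((u *\<^sub>R X + v *\<^sub>R Y) *v x)" unfolding e using qx u v by simp
    have "u * (x \<bullet> (X *v x)) + v * (x \<bullet> (Y *v x)) \<le> u * (x \<bullet> x) + v * (x \<bullet> x)"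
      using hx u v by (intro add_mono mult_left_mono) auto
    also have "\<dots> = (u + v) * (x \<bullet> x)" by (simp add: distrib_right)
    also have "\<dots> = x \<bullet> x" using uv by simp
    finally show "x \<bullet> ((u *\<^sub>R X + v *\<^sub>R Y) *v x) \<le> x \<bullet> x" unfolding e .
  next
    have "trace X \<le> real k" "trace Y \<le> real k" using X Y unfolding Cset_def by auto
    hence "u * trace X + v * trace Y \<le> u * real k + v * real k"
      using u v by (intro add_mono mult_left_mono) auto
    also have "\<dots> = (u + v) * real k" by (simp add: distrib_right)
    also have "\<dots> = real k" using uv by simp
    finally show "trace (u *\<^sub>R X + v *\<^sub>R Y) \<le> real k" by (simp add: trace_add trace_scaleR)
  qed
qed

lemma cont_mv: "continuous_on UNIV (\<lambda>X::real^'n^'m. X *v x)"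
  unfolding matrix_vector_mult_def by (intro continuous_intros)

lemma closed_C: "closed (Cset k :: (real^'n^'n) set)"
proof -
  have eq: "Cset k = (\<Inter>i. \<Inter>j. {X::real^'n^'n. X$i$j = X$j$i}) \<inter> (\<Inter>x. {X. 0 \<le> x \<bullet> (X *v x)})
     \<inter> {X. trace X \<le> real k} \<inter> (\<Inter>x. {X. norm (X *v x) \<le> norm x})"
    unfolding Cset_def psd_def spec_iff by (auto simp: transpose_def vec_eq_iff)
  show ?thesis unfolding eq
  proof (intro closed_Int closed_INT ballI)
    show "closed {X::real^'n^'n. X$i$j = X$j$i}" for i j
      by (rule closed_Collect_eq) (intro continuous_intros)+
    show "closed {X::real^'n^'n. 0 \<le> x \<bullet> (X *v x)}" for x
      by (rule closed_Collect_le) (intro continuous_intros cont_mv)+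
    show "closed {X::real^'n^'n. trace X \<le> real k}"
      unfolding trace_def by (rule closed_Collect_le) (intro continuous_intros)+
    show "closed {X::real^'n^'n. norm (X *v x) \<le> norm x}" for x
      by (rule closed_Collect_le) (intro continuous_intros cont_mv)+
  qed
qed

lemma bounded_C: "bounded (Cset k :: (real^'n^'n) set)"
proof -
  have "norm X \<le> real CARD('n) * real CARD('n)" if X: "X \<in> Cset k" for X :: "real^'n^'n"
  proof -
    have ent: "\<bar>X$i$j\<bar> \<le> 1" for i j
      using matrix_component_le_onorm[of X i j] X unfolding Cset_def spec_norm_def by auto
    have "norm X \<le> (\<Sum>i\<in>UNIV. norm (X$i))"
      unfolding norm_vec_def by (rule L2_set_le_sum) simp
    also have "\<dots> \<le> (\<Sum>i\<in>(UNIV::'n set). \<Sum>j\<in>(UNIV::'n set). \<bar>X$i$j\<bar>)"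
      by (intro sum_mono norm_le_l1_cart)
    also have "\<dots> \<le> (\<Sum>i\<in>(UNIV::'n set). \<Sum>j\<in>(UNIV::'n set). 1)"
      by (intro sum_mono ent)
    finally show ?thesis by simp
  qed
  thus ?thesis unfolding bounded_iff by blast
qed

lemma compact_C: "compact (Cset k :: (real^'n^'n) set)"
  by (intro compact_eq_bounded_closed[THEN iffD2] conjI bounded_C closed_C)

lemma R_sub_C: "rank_set k \<subseteq> (Cset k :: (real^'n^'n) set)"
proof
  fix X :: "real^'n^'n" assume "X \<in> rank_set k"
  hence X: "psd X" "rank X \<le> k" "spec_norm X \<le> 1" unfolding rank_set_def by auto
  have "trace X \<le> real (rank X)" by (rule trace_le_rank[OF X(1) X(3)])
  also have "\<dots> \<le> real k" using X(2) by simp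
  finally show "X \<in> Cset k" using X unfolding Cset_def by auto
qed

definition outer :: "real^'n \<Rightarrow> real^'n \<Rightarrow> real^'n^'n" where
  "outer u v = (\<chi> i j. u$i * v$j)"

lemma outer_apply: "outer u v *v x = (v \<bullet> x) *\<^sub>R u"
  by (simp add: outer_def matrix_vector_mult_def vec_eq_iff inner_vec_def sum_distrib_left mult.assoc mult.commute mult.left_commute)

lemma outer_transpose: "transpose (outer u v) = outer v u"
  by (simp add: outer_def transpose_def vec_eq_iff mult.commute)

lemma trace_outer: "trace (outer u v) = u \<bullet> v"
  by (simp add: outer_def trace_def inner_vec_def)

lemma scal_lo:
  fixes l1 l2 a c al be d :: real
  assumes "d \<le> l1" "d \<le> l2" "\<bar>al\<bar> + \<bar>be\<bar> \<le> d"
  shows "0 \<le> l1*a^2 + l2*c^2 + al*(a^2 - c^2) + 2*be*a*c"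
proof -
  have "2*be*a*c \<ge> - (\<bar>be\<bar>*(a^2 + c^2))"
  proof (cases "be \<ge> 0")
    case True
    have "0 \<le> be * (a + c)^2" using True by simp
    thus ?thesis using True by (simp add: power2_eq_square algebra_simps)
  next
    case False
    have "0 \<le> (-be) * (a - c)^2" using False by (intro mult_nonneg_nonneg) auto
    thus ?thesis using False by (simp add: power2_eq_square algebra_simps)
  qed
  moreover have "0 \<le> (l1 + al - \<bar>be\<bar>) * a^2" using assms by (intro mult_nonneg_nonneg) auto
  moreover have "0 \<le> (l2 - al - \<bar>be\<bar>) * c^2" using assms by (intro mult_nonneg_nonneg) auto
  ultimately show ?thesis by (simp add: algebra_simps)
qed

lemma scal_hi:
  fixes l1 l2 a c al be d :: real
  assumes "l1 \<le> 1 - d" "l2 \<le> 1 - d" "\<bar>al\<bar> + \<bar>be\<bar> \<le> d"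
  shows "l1*a^2 + l2*c^2 + al*(a^2 - c^2) + 2*be*a*c \<le> a^2 + c^2"
proof -
  have "0 \<le> (1-l1) * a^2 + (1-l2) * c^2 + (-al)*(a^2 - c^2) + 2*(-be)*a*c"
    by (rule scal_lo[of d]) (use assms in auto)
  thus ?thesis by (simp add: algebra_simps)
qed

lemma sum_two:
  assumes "finite B" "b1 \<in> B" "b2 \<in> B" "b1 \<noteq> b2"
  shows "sum f B = f b1 + f b2 + sum f (B - {b1, b2})"
proof -
  have "sum f B = f b1 + sum f (B - {b1})" using assms by (simp add: sum.remove)
  also have "sum f (B - {b1}) = f b2 + sum f (B - {b1} - {b2})"
    using assms by (intro sum.remove) auto
  also have "B - {b1} - {b2} = B - {b1, b2}" by auto
  finally show ?thesis by (simp add: add.assoc)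
qed

lemma pert:
  fixes Z :: "real^'n^'n"
  assumes Z: "Z \<in> Cset k" and B: "onb B" and e: "\<forall>b\<in>B. Z *v b = (b \<bullet> (Z *v b)) *\<^sub>R b"
    and b: "b1 \<in> B" "b2 \<in> B" "b1 \<noteq> b2"
    and d: "d \<le> b1 \<bullet> (Z *v b1)" "d \<le> b2 \<bullet> (Z *v b2)" "b1 \<bullet> (Z *v b1) \<le> 1 - d" "b2 \<bullet> (Z *v b2) \<le> 1 - d"
    and ab: "\<bar>al\<bar> + \<bar>be\<bar> \<le> d"
  shows "Z + al *\<^sub>R (outer b1 b1 - outer b2 b2) + be *\<^sub>R (outer b1 b2 + outer b2 b1) \<in> Cset k"
proof -
  let ?M = "Z + al *\<^sub>R (outer b1 b1 - outer b2 b2) + be *\<^sub>R (outer b1 b2 + outer b2 b1)"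
  have Zp: "psd Z" "trace Z \<le> real k" "spec_norm Z \<le> 1" using Z unfolding Cset_def by auto
  have sym: "transpose Z = Z" using Zp unfolding psd_def by blast
  have fin: "finite B" using B unfolding onb_def by blast
  have lam: "0 \<le> b \<bullet> (Z *v b) \<and> b \<bullet> (Z *v b) \<le> 1" if "b \<in> B" for b
    using eig_bounds[OF Zp(1) Zp(3), of b] B that unfolding onb_def by auto
  have ip: "b1 \<bullet> b1 = 1" "b2 \<bullet> b2 = 1" "b1 \<bullet> b2 = 0" "b2 \<bullet> b1 = 0"
    using onb_inner[OF B] b by auto
  have Mx: "?M *v x = Z *v x + al *\<^sub>R ((b1 \<bullet> x) *\<^sub>R b1 - (b2 \<bullet> x) *\<^sub>R b2)
      + be *\<^sub>R ((b2 \<bullet> x) *\<^sub>R b1 + (b1 \<bullet> x) *\<^sub>R b2)" for x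
    by (simp add: matrix_vector_mult_add_rdistrib matrix_vector_mult_diff_rdistrib
        scaleR_matrix_vector_assoc[symmetric] outer_apply)
  have quad: "x \<bullet> (?M *v x) = (\<Sum>b\<in>B - {b1,b2}. (b \<bullet> (Z *v b)) * (b \<bullet> x)^2)
     + ((b1 \<bullet> (Z *v b1)) * (b1 \<bullet> x)^2 + (b2 \<bullet> (Z *v b2)) * (b2 \<bullet> x)^2
        + al * ((b1 \<bullet> x)^2 - (b2 \<bullet> x)^2) + 2 * be * (b1 \<bullet> x) * (b2 \<bullet> x))" for x
  proof -
    have "x \<bullet> (Z *v x) = (\<Sum>b\<in>B. (b \<bullet> (Z *v b)) * (b \<bullet> x)^2)" by (rule onb_eigen_quad[OF B e])
    also have "\<dots> = (b1 \<bullet> (Z *v b1)) * (b1 \<bullet> x)^2 + (b2 \<bullet> (Z *v b2)) * (b2 \<bullet> x)^2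
        + (\<Sum>b\<in>B - {b1,b2}. (b \<bullet> (Z *v b)) * (b \<bullet> x)^2)" by (rule sum_two[OF fin b])
    finally have zq: "x \<bullet> (Z *v x) = \<dots>" .
    show ?thesis unfolding Mx
      by (simp add: inner_add_right inner_diff_right zq power2_eq_square inner_commute algebra_simps)
  qed
  have norm2: "x \<bullet> x = (\<Sum>b\<in>B - {b1,b2}. (b \<bullet> x)^2) + ((b1 \<bullet> x)^2 + (b2 \<bullet> x)^2)" for x
  proof -
    have "x \<bullet> x = (\<Sum>b\<in>B. (b \<bullet> x)^2)" using onb_parseval[OF B, of x x] by (simp add: power2_eq_square)
    also have "\<dots> = (b1 \<bullet> x)^2 + (b2 \<bullet> x)^2 + (\<Sum>b\<in>B - {b1,b2}. (b \<bullet> x)^2)" by (rule sum_two[OF fin b])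
    finally show ?thesis by simp
  qed
  show ?thesis
  proof (rule inC)
    show "transpose ?M = ?M"
      using sym by (simp add: transpose_def vec_eq_iff outer_def mult.commute)
  next
    fix x
    have r0: "0 \<le> (\<Sum>b\<in>B - {b1,b2}. (b \<bullet> (Z *v b)) * (b \<bullet> x)^2)"
      by (intro sum_nonneg mult_nonneg_nonneg) (use lam in auto)
    have s0: "0 \<le> (b1 \<bullet> (Z *v b1)) * (b1 \<bullet> x)^2 + (b2 \<bullet> (Z *v b2)) * (b2 \<bullet> x)^2
        + al * ((b1 \<bullet> x)^2 - (b2 \<bullet> x)^2) + 2 * be * (b1 \<bullet> x) * (b2 \<bullet> x)"
      by (rule scal_lo[OF d(1) d(2) ab])
    show "0 \<le> x \<bullet> (?M *v x)" unfolding quad using r0 s0 by linarith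
    have r1: "(\<Sum>b\<in>B - {b1,b2}. (b \<bullet> (Z *v b)) * (b \<bullet> x)^2) \<le> (\<Sum>b\<in>B - {b1,b2}. (b \<bullet> x)^2)"
    proof (rule sum_mono)
      fix b assume "b \<in> B - {b1,b2}"
      hence "b \<bullet> (Z *v b) \<le> 1" using lam by auto
      thus "(b \<bullet> (Z *v b)) * (b \<bullet> x)^2 \<le> (b \<bullet> x)^2"
        using mult_right_mono[of "b \<bullet> (Z *v b)" 1 "(b \<bullet> x)^2"] by simp
    qed
    have s1: "(b1 \<bullet> (Z *v b1)) * (b1 \<bullet> x)^2 + (b2 \<bullet> (Z *v b2)) * (b2 \<bullet> x)^2
        + al * ((b1 \<bullet> x)^2 - (b2 \<bullet> x)^2) + 2 * be * (b1 \<bullet> x) * (b2 \<bullet> x) \<le> (b1 \<bullet> x)^2 + (b2 \<bullet> x)^2"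
      by (rule scal_hi[OF d(3) d(4) ab])
    show "x \<bullet> (?M *v x) \<le> x \<bullet> x" unfolding quad norm2[of x] using r1 s1 by linarith
  next
    have "trace ?M = trace Z + al * (b1 \<bullet> b1 - b2 \<bullet> b2) + be * (b1 \<bullet> b2 + b2 \<bullet> b1)"
      by (simp add: trace_add trace_sub trace_scaleR trace_outer)
    also have "\<dots> = trace Z" using ip by simp
    finally show "trace ?M \<le> real k" using Zp(2) by simp
  qed
qed

lemma key:
  fixes Z :: "real^'n^'n"
  assumes Z: "Z \<in> Cset k" and rk: "k < rank Z"
  shows "\<exists>D1 D2. D1 \<noteq> 0 \<and> D2 \<noteq> 0 \<and> \<not>(\<exists>c. D2 = c *\<^sub>R D1) \<and>
     Z + D1 \<in> Cset k \<and> Z - D1 \<in> Cset k \<and> Z + D2 \<in> Cset k \<and> Z - D2 \<in> Cset k"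
proof -
  have Zp: "psd Z" "trace Z \<le> real k" "spec_norm Z \<le> 1" using Z unfolding Cset_def by auto
  have sym: "transpose Z = Z" using Zp unfolding psd_def by blast
  obtain B where B: "onb B" and e: "\<forall>b\<in>B. Z *v b = (b \<bullet> (Z *v b)) *\<^sub>R b"
    using spectral[OF sym] by blast
  have fin: "finite B" using B unfolding onb_def by blast
  define lam where "lam = (\<lambda>b. b \<bullet> (Z *v b))"
  have lb: "0 \<le> lam b \<and> lam b \<le> 1" if "b \<in> B" for b
    using eig_bounds[OF Zp(1) Zp(3), of b] B that unfolding onb_def lam_def by auto
  define Fr where "Fr = {b\<in>B. 0 < lam b \<and> lam b < 1}"
  define P where "P = {b\<in>B. lam b \<noteq> 0}"
  have finP: "finite P" using fin unfolding P_def by simp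
  have cP: "k + 1 \<le> card P" using rank_le_card[OF B e] rk unfolding P_def lam_def by simp
  have trP: "trace Z = sum lam P"
  proof -
    have "trace Z = sum lam B" unfolding lam_def by (rule onb_trace[OF B])
    also have "\<dots> = sum lam P" by (rule sum.mono_neutral_right) (use fin in \<open>auto simp: P_def\<close>)
    finally show ?thesis .
  qed
  have "\<exists>b1 b2. b1 \<in> Fr \<and> b2 \<in> Fr \<and> b1 \<noteq> b2"
  proof (rule ccontr)
    assume na: "\<not> ?thesis"
    obtain f where f: "Fr \<subseteq> {f}"
    proof (cases "Fr = {}")
      case True thus ?thesis using that by blast
    next
      case False
      then obtain f where "f \<in> Fr" by blast
      thus ?thesis using that na by blast
    qed
    have one: "lam b = 1" if "b \<in> P - {f}" for b
      using that lb[of b] f unfolding P_def Fr_def by force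
    have s1: "sum lam (P - {f}) = real (card (P - {f}))"
      using one by simp
    have "real k < sum lam P"
    proof (cases "f \<in> P")
      case True
      have "sum lam P = lam f + sum lam (P - {f})" using True finP by (simp add: sum.remove)
      moreover have "0 < lam f" using True lb[of f] unfolding P_def by force
      moreover have "card (P - {f}) = card P - 1" using True finP by simp
      ultimately show ?thesis using s1 cP by simp
    next
      case False
      hence "P - {f} = P" by simp
      thus ?thesis using s1 cP by simp
    qed
    thus False using trP Zp(2) by simp
  qed
  then obtain b1 b2 where b12: "b1 \<in> Fr" "b2 \<in> Fr" "b1 \<noteq> b2" by blast
  have bB: "b1 \<in> B" "b2 \<in> B" using b12 unfolding Fr_def by auto
  define d where "d = min (min (lam b1) (lam b2)) (min (1 - lam b1) (1 - lam b2))"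
  have dpos: "0 < d" using b12 by (auto simp: d_def Fr_def)
  have dle: "d \<le> b1 \<bullet> (Z *v b1)" "d \<le> b2 \<bullet> (Z *v b2)" "b1 \<bullet> (Z *v b1) \<le> 1 - d" "b2 \<bullet> (Z *v b2) \<le> 1 - d"
    by (auto simp: d_def lam_def)
  have ip: "b1 \<bullet> b1 = 1" "b2 \<bullet> b2 = 1" "b1 \<bullet> b2 = 0" "b2 \<bullet> b1 = 0"
    using onb_inner[OF B] bB b12(3) by auto
  define D1 where "D1 = d *\<^sub>R (outer b1 b1 - outer b2 b2)"
  define D2 where "D2 = d *\<^sub>R (outer b1 b2 + outer b2 b1)"
  have p: "Z + al *\<^sub>R (outer b1 b1 - outer b2 b2) + be *\<^sub>R (outer b1 b2 + outer b2 b1) \<in> Cset k"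
    if "\<bar>al\<bar> + \<bar>be\<bar> \<le> d" for al be
    by (rule pert[OF Z B e bB b12(3) dle that])
  have D1b: "D1 *v b1 = d *\<^sub>R b1"
    unfolding D1_def by (simp add: scaleR_matrix_vector_assoc[symmetric] matrix_vector_mult_diff_rdistrib outer_apply ip)
  have D2b: "D2 *v b1 = d *\<^sub>R b2"
    unfolding D2_def by (simp add: scaleR_matrix_vector_assoc[symmetric] matrix_vector_mult_add_rdistrib outer_apply ip)
  have b1z: "b1 \<noteq> 0" "b2 \<noteq> 0" using ip by auto
  show ?thesis
  proof (rule exI[of _ D1], rule exI[of _ D2], intro conjI)
    show "D1 \<noteq> 0" using D1b dpos b1z by auto
    show "D2 \<noteq> 0" using D2b dpos b1z by auto
    show "\<not> (\<exists>c. D2 = c *\<^sub>R D1)"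
    proof
      assume "\<exists>c. D2 = c *\<^sub>R D1"
      then obtain c where c: "D2 = c *\<^sub>R D1" by blast
      have "d *\<^sub>R b2 = (c * d) *\<^sub>R b1"
        using D1b D2b unfolding c by (simp add: scaleR_matrix_vector_assoc[symmetric])
      hence "b2 \<bullet> (d *\<^sub>R b2) = b2 \<bullet> ((c * d) *\<^sub>R b1)" by simp
      hence "d = 0" using ip by simp
      thus False using dpos by simp
    qed
    show "Z + D1 \<in> Cset k" using p[of d 0] dpos unfolding D1_def by simp
    show "Z - D1 \<in> Cset k" using p[of "-d" 0] dpos unfolding D1_def by (simp add: algebra_simps)
    show "Z + D2 \<in> Cset k" using p[of 0 d] dpos unfolding D2_def by simp
    show "Z - D2 \<in> Cset k" using p[of 0 "-d"] dpos unfolding D2_def by (simp add: algebra_simps)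
  qed
qed

lemma face_rank:
  fixes F :: "(real^'n^'n) set"
  assumes F: "F face_of Cset k" and ad: "aff_dim F \<le> 1" and Z: "Z \<in> F"
  shows "rank Z \<le> k"
proof (rule ccontr)
  assume "\<not> rank Z \<le> k"
  hence rk: "k < rank Z" by simp
  have ZC: "Z \<in> Cset k" using face_of_imp_subset[OF F] Z by blast
  obtain D1 D2 where D: "D1 \<noteq> 0" "D2 \<noteq> 0" "\<not>(\<exists>c. D2 = c *\<^sub>R D1)"
     "Z + D1 \<in> Cset k" "Z - D1 \<in> Cset k" "Z + D2 \<in> Cset k" "Z - D2 \<in> Cset k"
    using key[OF ZC rk] by blast
  have inF: "Z + D \<in> F" if "D \<noteq> 0" "Z + D \<in> Cset k" "Z - D \<in> Cset k" for D
  proof -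
    have "(Z - D) + (Z + D) = 2 *\<^sub>R Z" by (simp add: scaleR_2)
    hence mid: "midpoint (Z - D) (Z + D) = Z" unfolding midpoint_def by simp
    have "(Z + D) - (Z - D) = 2 *\<^sub>R D" by (simp add: scaleR_2)
    hence neq: "Z - D \<noteq> Z + D" using that(1) by auto
    have "midpoint (Z - D) (Z + D) \<in> open_segment (Z - D) (Z + D)" using neq by simp
    hence "Z \<in> open_segment (Z - D) (Z + D)" unfolding mid .
    thus ?thesis using face_ofD[OF F _ that(3) that(2) Z] by blast
  qed
  have sub: "{Z + D1, Z, Z + D2} \<subseteq> F" using inF[OF D(1) D(4) D(5)] inF[OF D(2) D(6) D(7)] Z by blast
  have "aff_dim {Z + D1, Z, Z + D2} \<le> 1" using order_trans[OF aff_dim_subset[OF sub] ad] .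
  hence "collinear {Z + D1, Z, Z + D2}" unfolding collinear_aff_dim .
  then obtain u where u: "\<And>x y. x \<in> {Z + D1, Z, Z + D2} \<Longrightarrow> y \<in> {Z + D1, Z, Z + D2} \<Longrightarrow> \<exists>c. x - y = c *\<^sub>R u"
    unfolding collinear_def by blast
  obtain c1 where c1: "(Z + D1) - Z = c1 *\<^sub>R u" using u[of "Z + D1" Z] by blast
  obtain c2 where c2: "(Z + D2) - Z = c2 *\<^sub>R u" using u[of "Z + D2" Z] by blast
  have e1: "D1 = c1 *\<^sub>R u" using c1 by simp
  have e2: "D2 = c2 *\<^sub>R u" using c2 by simp
  have "c1 \<noteq> 0" using D(1) e1 by auto
  hence "D2 = (c2 / c1) *\<^sub>R D1" unfolding e1 e2 by simp
  thus False using D(3) by blast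
qed

theorem lemma4:
  fixes k :: nat
  assumes "0 < k" and "k \<le> CARD('n)"
  shows "closure (convex hull (rank_set k :: (real^'n^'n) set)) = convex hull (rank_set k)
       \<and> convex hull (rank_set k :: (real^'n^'n) set)
           = {X. psd X \<and> trace X \<le> real k \<and> spec_norm X \<le> 1}
       \<and> (\<forall>F. F face_of closure (convex hull (rank_set k :: (real^'n^'n) set))
              \<and> aff_dim F \<le> 1 \<longrightarrow> F \<subseteq> rank_set k)"
proof -
  have ext: "{x. x extreme_point_of Cset k} \<subseteq> (rank_set k :: (real^'n^'n) set)"
  proof
    fix x :: "real^'n^'n" assume "x \<in> {x. x extreme_point_of Cset k}"
    hence f: "{x} face_of Cset k" by (simp add: face_of_singleton)
    have "rank x \<le> k" by (rule face_rank[OF f]) auto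
    moreover have "x \<in> Cset k" using face_of_imp_subset[OF f] by blast
    ultimately show "x \<in> rank_set k" unfolding Cset_def rank_set_def by auto
  qed
  have eq: "convex hull (rank_set k :: (real^'n^'n) set) = Cset k"
  proof
    show "convex hull rank_set k \<subseteq> (Cset k :: (real^'n^'n) set)"
      using R_sub_C[of k] convex_C[of k] by (rule hull_minimal)
    have "(Cset k :: (real^'n^'n) set) = convex hull {x. x extreme_point_of Cset k}"
      by (rule Krein_Milman_Minkowski[OF compact_C convex_C])
    also have "\<dots> \<subseteq> convex hull rank_set k" by (rule hull_mono[OF ext])
    finally show "(Cset k :: (real^'n^'n) set) \<subseteq> convex hull rank_set k" .
  qed
  have cl: "closure (convex hull (rank_set k :: (real^'n^'n) set)) = Cset k"
    unfolding eq by (rule closure_closed[OF closed_C])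
  show ?thesis
  proof (intro conjI allI impI)
    show "closure (convex hull (rank_set k :: (real^'n^'n) set)) = convex hull rank_set k"
      using cl eq by simp
    show "convex hull (rank_set k :: (real^'n^'n) set) = {X. psd X \<and> trace X \<le> real k \<and> spec_norm X \<le> 1}"
      unfolding eq Cset_def ..
    fix F :: "(real^'n^'n) set"
    assume "F face_of closure (convex hull rank_set k) \<and> aff_dim F \<le> 1"
    hence F: "F face_of Cset k" "aff_dim F \<le> 1" unfolding cl by auto
    show "F \<subseteq> rank_set k"
    proof
      fix Z assume Z: "Z \<in> F"
      have "rank Z \<le> k" by (rule face_rank[OF F Z])
      moreover have "Z \<in> Cset k" using face_of_imp_subset[OF F(1)] Z by blast
      ultimately show "Z \<in> rank_set k" unfolding Cset_def rank_set_def by auto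
    qed
  qed
qed

end
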